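(* Consider the following model. States $\omega_t\in\{0,1\}$, $t\in\{1,2\}$, with $\Pr[\omega_1=1]=\mu_0\in(0,1)$ and $\Pr[\omega_2=\omega\mid\omega_1=\omega]=\rho\in(1/2,1)$. In each period an agent A chooses $e_t\in\{0,1\}$; if $e_t=1$ he observes $\omega_t$, if $e_t=0$ he observes $\omega_t$ with probability $\pi\in(0,1)$ and nothing otherwise; he reports $r_t\in\{\varnothing,\omega_t\}$ if he observed $\omega_t$, else $r_t=\varnothing$. A's payoff is $x-c(e_1+e_2)$ with $x=\hat x(r_1,r_2)$, and here the testing cost is $c=0$. A mechanism consists of $\sigma_1\in\{0,1\}$, $\sigma_2:\{\varnothing,0,1\}\to\{0,1\}$, $\hat x:\{\varnothing,0,1\}^2\to\{0,1\}$; A best-responds, following the recommendation and disclosing when indifferent. A mechanism is IC if at every history occurring with positive probability A optimally obeys the testing recommendation and discloses every observed result, and $\hat x(r_1,\varnothing)=0$ whenever $\sigma_2(r_1)=1$. Then in any IC mechanism, if $r_1$ (occurring with positive probability) is such that $\sigma_2(r_1)=0$, we must have $\hat x(r_1,0)=\hat x(r_1,1)=\hat x(r_1,\varnothing)$. *)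

theory Defs
  imports Complex_Main
begin

text \<open>Reports / observations: None = empty report (nothing), Some w = state w
  (True = 1, False = 0).\<close>
type_synonym rep = "bool option"

definition pw :: "real \<Rightarrow> bool \<Rightarrow> real" where
  "pw q w = (if w then q else 1 - q)"

definition obsprob :: "real \<Rightarrow> bool \<Rightarrow> real" where
  "obsprob p e = (if e then 1 else p)"

definition belief2 :: "real \<Rightarrow> real \<Rightarrow> rep \<Rightarrow> real" where
  "belief2 mu0 rho o1 = (case o1 of Some w \<Rightarrow> pw rho w
                                  | None \<Rightarrow> mu0 * rho + (1 - mu0) * (1 - rho))"

text \<open>Period-2 expected payoff of choosing e2 after public report r1, with belief q
  on omega_2, reporting optimally after the observation.\<close>
definition val2 :: "(rep \<Rightarrow> rep \<Rightarrow> real) \<Rightarrow> real \<Rightarrow> real \<Rightarrow> rep \<Rightarrow> real \<Rightarrow> bool \<Rightarrow> real" where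
  "val2 x c p r1 q e2 =
     obsprob p e2 * (\<Sum>w\<in>UNIV. pw q w * max (x r1 (Some w)) (x r1 None))
     + (1 - obsprob p e2) * x r1 None - c * of_bool e2"

text \<open>Optimal continuation value at period-2 history (private observation o1, report r1).\<close>
definition cont2 :: "(rep \<Rightarrow> rep \<Rightarrow> real) \<Rightarrow> real \<Rightarrow> real \<Rightarrow> real \<Rightarrow> real \<Rightarrow> rep \<Rightarrow> rep \<Rightarrow> real" where
  "cont2 x c p mu0 rho o1 r1 =
     max (val2 x c p r1 (belief2 mu0 rho o1) True) (val2 x c p r1 (belief2 mu0 rho o1) False)"

definition val1 :: "(rep \<Rightarrow> rep \<Rightarrow> real) \<Rightarrow> real \<Rightarrow> real \<Rightarrow> real \<Rightarrow> real \<Rightarrow> bool \<Rightarrow> real" where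
  "val1 x c p mu0 rho e1 =
     obsprob p e1 * (\<Sum>w\<in>UNIV. pw mu0 w *
         max (cont2 x c p mu0 rho (Some w) (Some w)) (cont2 x c p mu0 rho (Some w) None))
     + (1 - obsprob p e1) * cont2 x c p mu0 rho None None - c * of_bool e1"

text \<open>Probability of period-1 observation (= report, on path) o under obedient play.\<close>
definition reach1 :: "real \<Rightarrow> real \<Rightarrow> bool \<Rightarrow> rep \<Rightarrow> real" where
  "reach1 p mu0 s1 o1 = (case o1 of None \<Rightarrow> 1 - obsprob p s1
                                  | Some w \<Rightarrow> obsprob p s1 * pw mu0 w)"

definition IC :: "real \<Rightarrow> real \<Rightarrow> real \<Rightarrow> real \<Rightarrow> bool \<Rightarrow> (rep \<Rightarrow> bool) \<Rightarrow> (rep \<Rightarrow> rep \<Rightarrow> real) \<Rightarrow> bool" where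
  "IC mu0 rho p c s1 s2 x \<longleftrightarrow>
     val1 x c p mu0 rho s1 \<ge> val1 x c p mu0 rho (\<not> s1)
   \<and> (\<forall>w. reach1 p mu0 s1 (Some w) > 0 \<longrightarrow>
          cont2 x c p mu0 rho (Some w) (Some w) \<ge> cont2 x c p mu0 rho (Some w) None)
   \<and> (\<forall>o1. reach1 p mu0 s1 o1 > 0 \<longrightarrow>
          val2 x c p o1 (belief2 mu0 rho o1) (s2 o1) \<ge> val2 x c p o1 (belief2 mu0 rho o1) (\<not> s2 o1)
        \<and> (\<forall>w. obsprob p (s2 o1) * pw (belief2 mu0 rho o1) w > 0 \<longrightarrow> x o1 (Some w) \<ge> x o1 None))
   \<and> (\<forall>r1. s2 r1 \<longrightarrow> x r1 None = 0)"

end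

theory Submission
  imports Defs
begin

theorem lemma6:
  fixes mu0 rho p c :: real and s1 :: bool and s2 :: "rep \<Rightarrow> bool"
    and x :: "rep \<Rightarrow> rep \<Rightarrow> real" and r1 :: rep
  assumes "0 < mu0" "mu0 < 1" "1/2 < rho" "rho < 1" "0 < p" "p < 1" "c = 0"
    and "\<forall>a b. x a b \<in> {0, 1}"
    and "IC mu0 rho p c s1 s2 x"
    and "reach1 p mu0 s1 r1 > 0"
    and "\<not> s2 r1"
  shows "x r1 (Some False) = x r1 (Some True) \<and> x r1 (Some True) = x r1 None"
proof -
  define q where "q = belief2 mu0 rho r1"
  have q: "0 < q \<and> q < 1"
  proof (cases r1)
    case None
    have "mu0 * rho + (1 - mu0) * (1 - rho) > 0"
      using assms(1-4) by (simp add: add_pos_nonneg)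
    moreover have "mu0 * rho + (1 - mu0) * (1 - rho) < mu0 * 1 + (1 - mu0) * 1"
      using assms(1-4) by (intro add_less_le_mono mult_strict_left_mono mult_left_mono) auto
    ultimately show ?thesis using None by (simp add: q_def belief2_def)
  next
    case (Some w)
    then show ?thesis using assms(3,4) by (simp add: q_def belief2_def pw_def)
  qed
  have ic1: "val2 x c p r1 q (s2 r1) \<ge> val2 x c p r1 q (\<not> s2 r1)"
   and ic2: "\<And>w. obsprob p (s2 r1) * pw q w > 0 \<Longrightarrow> x r1 (Some w) \<ge> x r1 None"
    using assms(9,10) unfolding IC_def q_def by blast+
  have pos: "obsprob p (s2 r1) * pw q w > 0" for w
    using q assms(5,11) by (simp add: obsprob_def pw_def)
  have g1: "x r1 (Some True) \<ge> x r1 None" and g0: "x r1 (Some False) \<ge> x r1 None"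
    using ic2 pos by auto
  have sumU: "(\<Sum>w\<in>(UNIV::bool set). f w) = f True + f False" for f :: "bool \<Rightarrow> real"
    by (simp add: UNIV_bool)
  define S where "S = q * x r1 (Some True) + (1 - q) * x r1 (Some False)"
  have "val2 x c p r1 q False \<ge> val2 x c p r1 q True" using ic1 assms(11) by simp
  hence "p * S + (1 - p) * x r1 None \<ge> S"
    using g1 g0 assms(7) by (simp add: val2_def obsprob_def sumU pw_def S_def max_def)
  hence "(1 - p) * (x r1 None - S) \<ge> 0" by (simp add: algebra_simps)
  hence le: "x r1 None \<ge> S" using assms(6)
    by (simp add: zero_le_mult_iff)
  have a: "q * (x r1 (Some True) - x r1 None) \<ge> 0" and b: "(1 - q) * (x r1 (Some False) - x r1 None) \<ge> 0"
    using q g1 g0 by auto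
  have "q * (x r1 (Some True) - x r1 None) + (1 - q) * (x r1 (Some False) - x r1 None) = S - x r1 None"
    by (simp add: S_def algebra_simps)
  hence "q * (x r1 (Some True) - x r1 None) = 0" "(1 - q) * (x r1 (Some False) - x r1 None) = 0"
    using a b le by linarith+
  thus ?thesis using q by auto
qed

end
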